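(* Let $g:\mathbb{R}^n\to\mathbb{R}^s$ be $C^2$, $D\subset\mathbb{R}^s$ closed, $\Gamma=g^{-1}(D)$, $\bar x\in\Gamma$, and assume (A1), (A2). Let $\bar x^*\in\hat N_\Gamma(\bar x)$ and let $\bar\lambda$ be the unique vector with $\bar\lambda\in\hat N_D(g(\bar x))$, $\nabla g(\bar x)^T\bar\lambda=\bar x^*$. Then $$\hat N_{\operatorname{gph}\hat N_\Gamma}(\bar x,\bar x^* )=\Big\{(w^*,w)\ \Big|\ \exists v^*\in\mathbb{R}^s:\ (v^*,\nabla g(\bar x)w)\in\hat N_{\operatorname{gph}\hat N_D}(g(\bar x),\bar\lambda),\ w^*=-\nabla^2\langle\bar\lambda,g\rangle(\bar x)w+\nabla g(\bar x)^Tv^*\Big\}.$$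
   Context: Standing assumptions (A1), (A2) for $g:\mathbb{R}^n\to\mathbb{R}^s$ ($C^2$), closed $D\subset\mathbb{R}^s$, $\Gamma=g^{-1}(D)$, $\bar x\in\Gamma$: (A1) There exist a closed set $\Theta\subset\mathbb{R}^d$, a twice continuously differentiable mapping $h:\mathbb{R}^s\to\mathbb{R}^d$ and a neighborhood $\mathcal V$ of $g(\bar x)$ such that $\nabla h(g(\bar x))$ is surjective and $D\cap\mathcal V=\{z\in\mathcal V\mid h(z)\in\Theta\}$. (A2) $\operatorname{range}\nabla g(\bar x)+\ker\nabla h(g(\bar x))=\mathbb{R}^s$. Tangent cone $T_A(\bar a)=\limsup_{t\searrow0}(A-\bar a)/t$; regular normal cone $\hat N_A(\bar a)=(T_A(\bar a))^\circ$, with $\hat N_A(a)=\emptyset$ for $a\notin A$. $\operatorname{gph}F$ is the graph of $F$. $\nabla^2\langle\lambda,g\rangle(x)$ is the Hessian of $x\mapsto\langle\lambda,g(x)\rangle$. *)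

theory Defs
  imports "HOL-Analysis.Analysis"
begin

definition tangent_cone :: "'a::real_normed_vector set \<Rightarrow> 'a \<Rightarrow> 'a set" where
  "tangent_cone A a = {w. \<exists>(t::nat \<Rightarrow> real) u. (\<forall>k. t k > 0) \<and> t \<longlonglongrightarrow> 0 \<and>
       u \<longlonglongrightarrow> w \<and> (\<forall>k. a + t k *\<^sub>R u k \<in> A)}"

definition polar_cone :: "'a::real_inner set \<Rightarrow> 'a set" where
  "polar_cone K = {v. \<forall>w\<in>K. inner v w \<le> 0}"

definition regular_normal_cone :: "'a::real_inner set \<Rightarrow> 'a \<Rightarrow> 'a set" where
  "regular_normal_cone A a = (if a \<in> A then polar_cone (tangent_cone A a) else {})"

definition gph :: "('a \<Rightarrow> 'b set) \<Rightarrow> ('a \<times> 'b) set" where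
  "gph F = {(x, y). y \<in> F x}"

definition C2_with :: "('a::euclidean_space \<Rightarrow> 'b::euclidean_space) \<Rightarrow> ('a \<Rightarrow> 'a \<Rightarrow>\<^sub>L 'b)
     \<Rightarrow> ('a \<Rightarrow> 'a \<Rightarrow>\<^sub>L 'a \<Rightarrow>\<^sub>L 'b) \<Rightarrow> bool" where
  "C2_with f f' f'' \<longleftrightarrow>
     (\<forall>x. (f has_derivative blinfun_apply (f' x)) (at x)) \<and>
     (\<forall>x. (f' has_derivative blinfun_apply (f'' x)) (at x)) \<and>
     continuous_on UNIV f''"

text \<open>Hessian of x \<mapsto> \<langle>\<lambda>, g x\<rangle> at a point, applied to a vector w, where B is the second
  derivative of g at that point: the vector H w with \<langle>H w, u\<rangle> = \<langle>\<lambda>, B w u\<rangle>.\<close>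
definition hess_mult :: "'b::euclidean_space \<Rightarrow> ('a::euclidean_space \<Rightarrow>\<^sub>L 'a \<Rightarrow>\<^sub>L 'b) \<Rightarrow> 'a \<Rightarrow> 'a" where
  "hess_mult lam B w = adjoint (blinfun_apply (blinfun_apply B w)) lam"

end

theory Submission
  imports Defs
begin



lemma tangent_cone_eventually:
  assumes "\<And>k. t k > 0" "t \<longlonglongrightarrow> 0" "u \<longlonglongrightarrow> w"
    and "eventually (\<lambda>k. a + t k *\<^sub>R u k \<in> A) sequentially"
  shows "w \<in> tangent_cone A a"
proof -
  from assms(4) obtain N where N: "\<And>k. k \<ge> N \<Longrightarrow> a + t k *\<^sub>R u k \<in> A"
    by (auto simp: eventually_sequentially)
  have "(\<lambda>k. t (k + N)) \<longlonglongrightarrow> 0" using assms(2) by (rule LIMSEQ_ignore_initial_segment)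
  moreover have "(\<lambda>k. u (k + N)) \<longlonglongrightarrow> w" using assms(3) by (rule LIMSEQ_ignore_initial_segment)
  ultimately show ?thesis unfolding tangent_cone_def
    using assms(1) N by (intro CollectI exI[of _ "\<lambda>k. t (k+N)"] exI[of _ "\<lambda>k. u (k+N)"]) auto
qed

lemma zero_in_tangent_cone:
  assumes "a \<in> A" shows "0 \<in> tangent_cone A a"
proof -
  have "(\<lambda>k. 1 / (real k + 1)) \<longlonglongrightarrow> 0"
    using LIMSEQ_inverse_real_of_nat by (simp add: inverse_eq_divide add.commute)
  then show ?thesis unfolding tangent_cone_def using assms
    by (intro CollectI exI[of _ "\<lambda>k. 1 / (real k + 1)"] exI[of _ "\<lambda>k. 0"]) auto
qed

lemma tangent_cone_local_sub:
  assumes "open U" "a \<in> U" "A \<inter> U \<subseteq> B"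
  shows "tangent_cone A a \<subseteq> tangent_cone B a"
proof
  fix w assume "w \<in> tangent_cone A a"
  then obtain t u where t: "\<And>k. t k > 0" "t \<longlonglongrightarrow> 0" and u: "u \<longlonglongrightarrow> w"
    and A: "\<And>k. a + t k *\<^sub>R u k \<in> A" unfolding tangent_cone_def by blast
  have "(\<lambda>k. t k *\<^sub>R u k) \<longlonglongrightarrow> 0 *\<^sub>R w" by (intro tendsto_scaleR t u)
  then have "(\<lambda>k. a + t k *\<^sub>R u k) \<longlonglongrightarrow> a + 0" by (intro tendsto_add) auto
  then have "eventually (\<lambda>k. a + t k *\<^sub>R u k \<in> U) sequentially"
    using assms(1,2) by (simp add: topological_tendstoD)
  then have "eventually (\<lambda>k. a + t k *\<^sub>R u k \<in> B) sequentially"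
    by eventually_elim (use A assms(3) in blast)
  then show "w \<in> tangent_cone B a" by (rule tangent_cone_eventually[OF t u])
qed

lemma tangent_cone_local:
  assumes "open U" "a \<in> U" "A \<inter> U = B \<inter> U"
  shows "tangent_cone A a = tangent_cone B a"
  using tangent_cone_local_sub[OF assms(1,2)] assms(3) by (metis Int_lower1 subset_antisym inf.cobounded2 le_infE)

lemma rnc_local:
  assumes "open U" "a \<in> U" "A \<inter> U = B \<inter> U"
  shows "regular_normal_cone A a = regular_normal_cone B a"
proof -
  have "a \<in> A \<longleftrightarrow> a \<in> B" using assms by blast
  then show ?thesis unfolding regular_normal_cone_def using tangent_cone_local[OF assms] by simp
qed

lemma gph_rnc_local:
  assumes "open U" "A \<inter> U = B \<inter> U"
  shows "gph (regular_normal_cone A) \<inter> (U \<times> UNIV) = gph (regular_normal_cone B) \<inter> (U \<times> UNIV)"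
  using rnc_local[OF assms(1) _ assms(2)] unfolding gph_def by auto

lemma polar_preimage:
  fixes M :: "'a::euclidean_space \<Rightarrow> 'b::euclidean_space"
  assumes "linear M" "surj M" "0 \<in> C"
  shows "polar_cone {u. M u \<in> C} = adjoint M ` polar_cone C"
proof
  show "adjoint M ` polar_cone C \<subseteq> polar_cone {u. M u \<in> C}"
    using assms(1) by (auto simp: polar_cone_def adjoint_clauses)
next
  show "polar_cone {u. M u \<in> C} \<subseteq> adjoint M ` polar_cone C"
  proof
    fix v assume v: "v \<in> polar_cone {u. M u \<in> C}"
    have "v \<bullet> k = 0" if "M k = 0" for k
    proof -
      have "M (-k) = 0" using that assms(1) linear_neg by (metis neg_0_equal_iff_equal)
      then have "v \<bullet> k \<le> 0" "v \<bullet> (-k) \<le> 0" using v that assms(3) by (auto simp: polar_cone_def simp del: inner_minus_right)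
      then show ?thesis by simp
    qed
    then have "v \<in> (M -` {0})\<^sup>\<bottom>"
      by (auto simp: orthogonal_comp_def orthogonal_def inner_commute)
    also have "M -` {0} = (range (adjoint M))\<^sup>\<bottom>" by (rule ker_orthogonal_comp_adjoint[OF assms(1)])
    also have "(range (adjoint M))\<^sup>\<bottom>\<^sup>\<bottom> = range (adjoint M)"
      by (intro orthogonal_comp_self linear_subspace_image adjoint_linear assms(1) subspace_UNIV)
    finally obtain e where e: "v = adjoint M e" by blast
    have "e \<in> polar_cone C" unfolding polar_cone_def
    proof (intro CollectI ballI)
      fix c assume "c \<in> C"
      obtain u where u: "c = M u" using assms(2) by (metis surjD)
      have "v \<bullet> u \<le> 0" using v u \<open>c \<in> C\<close> by (auto simp: polar_cone_def)
      moreover have "v \<bullet> u = e \<bullet> c" using e u adjoint_clauses(2)[OF assms(1)] by simp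
      ultimately show "e \<bullet> c \<le> 0" by simp
    qed
    then show "v \<in> adjoint M ` polar_cone C" using e by blast
  qed
qed

lemma adjoint_sum:
  fixes f :: "'a::euclidean_space \<Rightarrow> 'b::euclidean_space"
  assumes "linear f"
  shows "adjoint f y = (\<Sum>i\<in>Basis. (f i \<bullet> y) *\<^sub>R i)"
proof (rule euclidean_eqI)
  fix b :: 'a assume b: "b \<in> Basis"
  have "b \<bullet> (\<Sum>i\<in>Basis. (f i \<bullet> y) *\<^sub>R i) = (\<Sum>i\<in>Basis. (f i \<bullet> y) * (b \<bullet> i))"
    by (simp add: inner_sum_right)
  also have "\<dots> = f b \<bullet> y" using b
    by (simp add: inner_Basis if_distrib sum.delta cong: if_cong)
  finally show "adjoint f y \<bullet> b = (\<Sum>i\<in>Basis. (f i \<bullet> y) *\<^sub>R i) \<bullet> b"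
    by (simp add: adjoint_clauses[OF assms] inner_commute)
qed




lemma diff_quot_seq:
  fixes F :: "'a::real_normed_vector \<Rightarrow> 'b::real_normed_vector"
  assumes der: "(F has_derivative F') (at p)"
    and t: "\<And>k. t k > 0" "t \<longlonglongrightarrow> 0" and u: "u \<longlonglongrightarrow> w"
  shows "(\<lambda>k. (1 / t k) *\<^sub>R (F (p + t k *\<^sub>R u k) - F p)) \<longlonglongrightarrow> F' w"
proof -
  have bl: "bounded_linear F'" using der by (simp add: has_derivative_at')
  have lim1: "(\<lambda>k. F' (u k)) \<longlonglongrightarrow> F' w"
    using bounded_linear.tendsto[OF bl u] .
  have "(\<lambda>k. (1 / t k) *\<^sub>R (F (p + t k *\<^sub>R u k) - F p) - F' (u k)) \<longlonglongrightarrow> 0"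
  proof (rule tendstoI)
    fix e :: real assume e: "e > 0"
    define e' where "e' = e / (norm w + 2)"
    have e': "e' > 0" using e unfolding e'_def by (intro divide_pos_pos) (auto intro: add_nonneg_pos)
    obtain d where d: "d > 0" and dd: "\<And>x'. 0 < norm (x' - p) \<and> norm (x' - p) < d \<Longrightarrow>
        norm (F x' - F p - F' (x' - p)) / norm (x' - p) < e'"
      using der e' unfolding has_derivative_at' by blast
    have "(\<lambda>k. t k *\<^sub>R u k) \<longlonglongrightarrow> 0 *\<^sub>R w" by (intro tendsto_scaleR t u)
    then have ev1: "eventually (\<lambda>k. norm (t k *\<^sub>R u k) < d) sequentially"
      using d by (auto dest: tendstoD simp: dist_norm)
    have "(\<lambda>k. norm (u k)) \<longlonglongrightarrow> norm w" using u by (rule tendsto_norm)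
    then have ev2: "eventually (\<lambda>k. norm (u k) < norm w + 1) sequentially"
      by (rule order_tendstoD) simp
    show "eventually (\<lambda>k. dist ((1 / t k) *\<^sub>R (F (p + t k *\<^sub>R u k) - F p) - F' (u k)) 0 < e) sequentially"
      using ev1 ev2
    proof eventually_elim
      case (elim k)
      have tk: "t k > 0" by (rule t(1))
      have eq: "(1 / t k) *\<^sub>R (F (p + t k *\<^sub>R u k) - F p) - F' (u k)
          = (1 / t k) *\<^sub>R (F (p + t k *\<^sub>R u k) - F p - F' (t k *\<^sub>R u k))"
        using tk by (simp add: linear_simps(5)[OF bl] scaleR_diff_right)
      have bnd: "norm (F (p + t k *\<^sub>R u k) - F p - F' (t k *\<^sub>R u k)) \<le> e' * norm (t k *\<^sub>R u k)"
      proof (cases "t k *\<^sub>R u k = 0")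
        case True then show ?thesis by (simp add: linear_simps(3)[OF bl] del: scaleR_eq_0_iff)
      next
        case False
        then have "norm (F (p + t k *\<^sub>R u k) - F p - F' (t k *\<^sub>R u k)) / norm (t k *\<^sub>R u k) < e'"
          using dd[of "p + t k *\<^sub>R u k"] elim by simp
        then show ?thesis using False by (simp add: divide_less_eq less_imp_le)
      qed
      have "norm ((1 / t k) *\<^sub>R (F (p + t k *\<^sub>R u k) - F p - F' (t k *\<^sub>R u k))) \<le> e' * norm (u k)"
        using bnd tk by (simp add: divide_le_eq mult.commute mult.left_commute)
      also have "\<dots> \<le> e' * (norm w + 1)" using elim e' by simp
      also have "\<dots> < e"
      proof -
        have pos: "norm w + 2 > 0" by (simp add: add_nonneg_pos)
        have "e * (norm w + 1) < e * (norm w + 2)" using e by simp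
        then show ?thesis using pos unfolding e'_def by (simp add: divide_less_eq mult.commute)
      qed
      finally show ?case by (simp add: eq dist_norm)
    qed
  qed
  from tendsto_add[OF this lim1] show ?thesis by simp
qed

lemma solve_lemma:
  fixes F :: "'a::euclidean_space \<Rightarrow> 'b::euclidean_space" and F' :: "'a \<Rightarrow> 'a \<Rightarrow>\<^sub>L 'b"
  assumes der: "\<And>x. (F has_derivative blinfun_apply (F' x)) (at x)"
    and cont: "isCont F' x0" and surj: "surj (blinfun_apply (F' x0))"
  shows "\<exists>\<delta>>0. \<exists>C. \<forall>x y. dist x x0 < \<delta> \<longrightarrow> norm (y - F x) < \<delta> \<longrightarrow>
            (\<exists>z. norm z \<le> C * norm (y - F x) \<and> F (x + z) = y)"
proof -
  have lin0: "linear (blinfun_apply (F' x0))" by (rule bounded_linear.linear[OF blinfun.bounded_linear_right])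
  obtain R where R: "linear R" "blinfun_apply (F' x0) \<circ> R = id"
    using real_vector.linear_surjective_right_inverse[OF lin0 surj] by blast
  have RR: "blinfun_apply (F' x0) (R v) = v" for v using R(2) by (metis comp_apply id_apply)
  obtain K where K: "K > 0" "\<And>v. norm (R v) \<le> K * norm v" using linear_bounded_pos[OF R(1)] by blast
  obtain \<epsilon> where eps: "\<epsilon> > 0" "\<And>p. dist p x0 < \<epsilon> \<Longrightarrow> dist (F' p) (F' x0) < 1 / (2 * K)"
  proof -
    have "1 / (2 * K) > 0" using K(1) by simp
    then show ?thesis using cont that unfolding continuous_at_eps_delta by blast
  qed
  define \<delta> where "\<delta> = \<epsilon> / (1 + 2 * K)"
  have \<delta>: "\<delta> > 0" using eps K by (simp add: \<delta>_def)
  have blR: "bounded_linear R" using R(1) by (simp add: linear_conv_bounded_linear)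
  have main: "\<exists>z. norm z \<le> (2 * K) * norm (y - F x) \<and> F (x + z) = y"
    if x: "dist x x0 < \<delta>" and y: "norm (y - F x) < \<delta>" for x y
  proof -
    define r where "r = norm (y - F x)"
    define S where "S = cball (0::'b) (2 * r)"
    define T where "T z = z - (F (x + R z) - y)" for z
    have r: "r \<ge> 0" "r < \<delta>" using y by (auto simp: r_def)
    have inS: "dist (x + R z) x0 < \<epsilon>" if "z \<in> S" for z
    proof -
      have "norm (R z) \<le> K * (2 * r)" using K(2)[of z] that K(1) by (auto simp: S_def intro: order_trans)
      then have "dist (x + R z) x0 \<le> dist x x0 + K * (2 * r)"
        by (simp add: dist_norm) (smt (verit, ccfv_threshold) norm_triangle_ineq4 add_diff_eq diff_add_eq norm_minus_commute norm_triangle_ineq)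
      also have "\<dots> < \<delta> + K * (2 * \<delta>)" using x r K(1) by (intro add_strict_mono) auto
      also have "\<dots> = \<delta> * (1 + 2 * K)" by (simp add: algebra_simps)
      also have "\<dots> = \<epsilon>" using K(1) unfolding \<delta>_def by (simp add: add_pos_pos)
      finally show ?thesis .
    qed
    have Tder: "(T has_derivative (\<lambda>v. v - blinfun_apply (F' (x + R z)) (R v))) (at z within S)" for z
    proof -
      have "((\<lambda>z. x + R z) has_derivative (\<lambda>v. 0 + R v)) (at z)"
        by (intro has_derivative_add has_derivative_const bounded_linear_imp_has_derivative blR)
      then have "((\<lambda>z. x + R z) has_derivative R) (at z)" by simp
      then have "((\<lambda>z. F (x + R z)) has_derivative (\<lambda>v. blinfun_apply (F' (x + R z)) (R v))) (at z)"
        using der[of "x + R z"] by (auto intro: has_derivative_compose[unfolded o_def])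
      then have "(T has_derivative (\<lambda>v. v - (blinfun_apply (F' (x + R z)) (R v) - 0))) (at z)"
        unfolding T_def by (intro has_derivative_diff has_derivative_ident has_derivative_const)
      then show ?thesis by (simp add: has_derivative_at_withinI)
    qed
    have Tnorm: "onorm (\<lambda>v. v - blinfun_apply (F' (x + R z)) (R v)) \<le> 1/2" if "z \<in> S" for z
    proof (rule onorm_bound)
      fix v
      have "v - blinfun_apply (F' (x + R z)) (R v) = blinfun_apply (F' x0 - F' (x + R z)) (R v)"
        by (simp add: RR blinfun.diff_left)
      also have "norm \<dots> \<le> norm (F' x0 - F' (x + R z)) * norm (R v)" by (rule norm_blinfun)
      also have "\<dots> \<le> (1 / (2 * K)) * (K * norm v)"
        using eps(2)[OF inS[OF that]] K by (intro mult_mono) (auto simp: dist_norm norm_minus_commute)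
      also have "\<dots> = 1/2 * norm v" using K(1) by simp
      finally show "norm (v - blinfun_apply (F' (x + R z)) (R v)) \<le> 1/2 * norm v" .
    qed simp
    have lip: "dist (T a) (T b) \<le> 1/2 * dist a b" if "a \<in> S" "b \<in> S" for a b
      using differentiable_bound[OF _ Tder Tnorm that] by (simp add: S_def dist_norm)
    have T0: "norm (T 0) = r"
      using linear_0[OF R(1)] by (simp add: T_def r_def norm_minus_commute)
    have TS: "T ` S \<subseteq> S"
    proof
      fix w assume "w \<in> T ` S"
      then obtain a where a: "a \<in> S" "w = T a" by blast
      have 0: "0 \<in> S" using r by (simp add: S_def)
      have "norm (T a) \<le> norm (T a - T 0) + norm (T 0)" by (metis norm_triangle_ineq diff_add_cancel)
      also have "\<dots> \<le> 1/2 * norm a + r" using lip[OF a(1) 0] T0 by (simp add: dist_norm)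
      also have "\<dots> \<le> 2 * r" using a(1) by (simp add: S_def)
      finally show "w \<in> S" using a by (simp add: S_def)
    qed
    have "\<exists>!z. z \<in> S \<and> T z = z"
    proof (rule Banach_fix[of S "1/2" T])
      show "complete S" unfolding S_def by (simp add: complete_eq_closed)
      show "S \<noteq> {}" using r by (auto simp: S_def)
      show "T ` S \<subseteq> S" by (rule TS)
    qed (use lip in auto)
    then obtain z where z: "z \<in> S" "T z = z" by blast
    then have Fz: "F (x + R z) = y" by (simp add: T_def)
    have "norm (R z) \<le> K * (2 * r)" using K(2)[of z] z(1) K(1) by (auto simp: S_def intro: order_trans)
    then show ?thesis using Fz by (intro exI[of _ "R z"]) (simp add: r_def)
  qed
  show ?thesis using \<delta> main by blast
qed




lemma lin_bl: "linear (blinfun_apply A)"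
  by (rule bounded_linear.linear[OF blinfun.bounded_linear_right])

lemma adj_diff:
  fixes A B :: "'a::euclidean_space \<Rightarrow>\<^sub>L 'b::euclidean_space"
  shows "adjoint (blinfun_apply A) y - adjoint (blinfun_apply B) y = adjoint (blinfun_apply (A - B)) y"
  by (simp add: adjoint_sum[OF lin_bl] sum_subtractf[symmetric] blinfun.diff_left
      inner_diff_left scaleR_diff_left)

lemma adj_norm:
  fixes A :: "'a::euclidean_space \<Rightarrow>\<^sub>L 'b::euclidean_space"
  shows "norm (adjoint (blinfun_apply A) y) \<le> norm A * norm y"
proof -
  let ?v = "adjoint (blinfun_apply A) y"
  have "norm ?v ^ 2 = ?v \<bullet> ?v" by (simp add: power2_norm_eq_inner)
  also have "\<dots> = blinfun_apply A ?v \<bullet> y" by (simp add: adjoint_clauses(1)[OF lin_bl])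
  also have "\<dots> \<le> norm (blinfun_apply A ?v) * norm y" by (rule norm_cauchy_schwarz)
  also have "\<dots> \<le> (norm A * norm ?v) * norm y" by (intro mult_right_mono norm_blinfun) simp
  finally have "norm ?v * norm ?v \<le> norm ?v * (norm A * norm y)"
    by (simp add: power2_eq_square mult_ac)
  then show ?thesis
    by (cases "norm ?v = 0") (auto simp: mult_le_cancel_left)
qed

lemma adj_tendsto:
  fixes A :: "nat \<Rightarrow> 'a::euclidean_space \<Rightarrow>\<^sub>L 'b::euclidean_space"
  assumes "A \<longlonglongrightarrow> A0" "y \<longlonglongrightarrow> y0"
  shows "(\<lambda>k. adjoint (blinfun_apply (A k)) (y k)) \<longlonglongrightarrow> adjoint (blinfun_apply A0) y0"
  unfolding adjoint_sum[OF lin_bl]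
  by (intro tendsto_intros blinfun.tendsto assms)




locale core =
  fixes F :: "'a::euclidean_space \<Rightarrow> 'b::euclidean_space" and F' :: "'a \<Rightarrow> 'a \<Rightarrow>\<^sub>L 'b"
    and x0 :: 'a
  assumes der: "\<And>x. (F has_derivative blinfun_apply (F' x)) (at x)"
    and cont: "isCont F' x0" and surj0: "surj (blinfun_apply (F' x0))"
begin

lemma lower_bound:
  "\<exists>c>0. \<exists>r>0. \<forall>x. dist x x0 < r \<longrightarrow> (\<forall>\<nu>. norm \<nu> \<le> c * norm (adjoint (blinfun_apply (F' x)) \<nu>))"
proof -
  have inj: "inj (adjoint (blinfun_apply (F' x0)))" using surj0 by (simp add: lin_bl)
  obtain L where L: "linear L" "L \<circ> adjoint (blinfun_apply (F' x0)) = id"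
    using real_vector.linear_injective_left_inverse[OF adjoint_linear[OF lin_bl] inj] by blast
  obtain K where K: "K > 0" "\<And>v. norm (L v) \<le> K * norm v" using linear_bounded_pos[OF L(1)] by blast
  have lb0: "norm \<nu> \<le> K * norm (adjoint (blinfun_apply (F' x0)) \<nu>)" for \<nu>
    using K(2)[of "adjoint (blinfun_apply (F' x0)) \<nu>"] L(2) by (metis comp_apply id_apply)
  obtain r where r: "r > 0" "\<And>x. dist x x0 < r \<Longrightarrow> dist (F' x) (F' x0) < 1 / (2 * K)"
  proof -
    have "1 / (2 * K) > 0" using K(1) by simp
    then show ?thesis using cont that unfolding continuous_at_eps_delta by blast
  qed
  have "norm \<nu> \<le> (2 * K) * norm (adjoint (blinfun_apply (F' x)) \<nu>)" if x: "dist x x0 < r" for x \<nu>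
  proof -
    have 0: "norm (adjoint (blinfun_apply (F' x0)) \<nu>) \<le> norm (adjoint (blinfun_apply (F' x)) \<nu>)
        + norm (adjoint (blinfun_apply (F' x0)) \<nu> - adjoint (blinfun_apply (F' x)) \<nu>)"
      by (metis norm_triangle_ineq diff_add_cancel add.commute)
    have "norm (adjoint (blinfun_apply (F' x0)) \<nu> - adjoint (blinfun_apply (F' x)) \<nu>)
        = norm (adjoint (blinfun_apply (F' x0 - F' x)) \<nu>)" by (simp add: adj_diff)
    also have "\<dots> \<le> norm (F' x0 - F' x) * norm \<nu>" by (rule adj_norm)
    also have "\<dots> \<le> (1 / (2 * K)) * norm \<nu>"
      using r(2)[OF x] by (intro mult_right_mono) (auto simp: dist_norm norm_minus_commute)
    finally have 1: "norm (adjoint (blinfun_apply (F' x0)) \<nu>) \<le> norm (adjoint (blinfun_apply (F' x)) \<nu>) + (1 / (2 * K)) * norm \<nu>"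
      using 0 by linarith
    have "norm \<nu> \<le> K * (norm (adjoint (blinfun_apply (F' x)) \<nu>) + (1 / (2 * K)) * norm \<nu>)"
      using lb0[of \<nu>] mult_left_mono[OF 1, of K] K(1) by linarith
    also have "\<dots> = K * norm (adjoint (blinfun_apply (F' x)) \<nu>) + norm \<nu> / 2"
      using K(1) by (simp add: distrib_left)
    finally show ?thesis by simp
  qed
  then show ?thesis using r(1) K(1) by (intro exI[of _ "2 * K"] conjI exI[of _ r]) auto
qed

lemma surj_near:
  assumes "\<forall>\<nu>. norm \<nu> \<le> c * norm (adjoint (blinfun_apply (F' x)) \<nu>)"
  shows "surj (blinfun_apply (F' x))"
proof -
  have "inj (adjoint (blinfun_apply (F' x)))"
  proof (rule linear_injective_0[THEN iffD2, OF adjoint_linear[OF lin_bl], rule_format])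
    fix \<nu> assume "adjoint (blinfun_apply (F' x)) \<nu> = 0"
    then show "\<nu> = 0" using assms[rule_format, of \<nu>] by simp
  qed
  then show ?thesis by (simp add: lin_bl)
qed

definition "good r c C \<longleftrightarrow> r > 0 \<and> c > 0 \<and>
   (\<forall>x. dist x x0 < r \<longrightarrow> (\<forall>\<nu>. norm \<nu> \<le> c * norm (adjoint (blinfun_apply (F' x)) \<nu>))) \<and>
   (\<forall>x y. dist x x0 < r \<longrightarrow> norm (y - F x) < r \<longrightarrow> (\<exists>z. norm z \<le> C * norm (y - F x) \<and> F (x + z) = y))"

lemma good_exists: "\<exists>r c C. good r c C"
proof -
  obtain c r1 where c: "c > 0" "r1 > 0" "\<And>x \<nu>. dist x x0 < r1 \<Longrightarrow> norm \<nu> \<le> c * norm (adjoint (blinfun_apply (F' x)) \<nu>)"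
    using lower_bound by blast
  obtain r2 C where r2: "r2 > 0" "\<And>x y. dist x x0 < r2 \<Longrightarrow> norm (y - F x) < r2 \<Longrightarrow> (\<exists>z. norm z \<le> C * norm (y - F x) \<and> F (x + z) = y)"
    using solve_lemma[OF der cont surj0] by blast
  have "good (min r1 r2) c C" unfolding good_def
  proof (intro conjI allI impI)
    show "min r1 r2 > 0" "c > 0" using c r2 by auto
    show "norm \<nu> \<le> c * norm (adjoint (blinfun_apply (F' x)) \<nu>)" if "dist x x0 < min r1 r2" for x \<nu>
      using c(3) that by simp
    show "\<exists>z. norm z \<le> C * norm (y - F x) \<and> F (x + z) = y"
      if "dist x x0 < min r1 r2" "norm (y - F x) < min r1 r2" for x y
      using r2(2) that by simp
  qed
  then show ?thesis by blast
qed

lemma lift: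
  assumes g: "good r c C" and p: "dist p x0 < r"
    and t: "\<And>k. t k > 0" "t \<longlonglongrightarrow> 0" and a: "a \<longlonglongrightarrow> blinfun_apply (F' p) u"
  shows "\<exists>uu. uu \<longlonglongrightarrow> u \<and> eventually (\<lambda>k. F (p + t k *\<^sub>R uu k) = F p + t k *\<^sub>R a k) sequentially"
proof -
  define q where "q k = p + t k *\<^sub>R u" for k
  define e where "e k = (1 / t k) *\<^sub>R (F p + t k *\<^sub>R a k - F (q k))" for k
  have "(\<lambda>k. (1 / t k) *\<^sub>R (F (p + t k *\<^sub>R u) - F p)) \<longlonglongrightarrow> blinfun_apply (F' p) u"
    by (rule diff_quot_seq[OF der t]) simp
  then have "(\<lambda>k. a k - (1 / t k) *\<^sub>R (F (p + t k *\<^sub>R u) - F p)) \<longlonglongrightarrow> blinfun_apply (F' p) u - blinfun_apply (F' p) u"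
    by (intro tendsto_diff a)
  moreover have "e = (\<lambda>k. a k - (1 / t k) *\<^sub>R (F (p + t k *\<^sub>R u) - F p))"
  proof
    fix k show "e k = a k - (1 / t k) *\<^sub>R (F (p + t k *\<^sub>R u) - F p)"
      using t(1)[of k] by (simp add: e_def q_def scaleR_diff_right algebra_simps)
  qed
  ultimately have e0: "e \<longlonglongrightarrow> 0" by simp
  have "(\<lambda>k. p + t k *\<^sub>R u) \<longlonglongrightarrow> p + 0 *\<^sub>R u" by (intro tendsto_intros t)
  then have "q \<longlonglongrightarrow> p" by (simp add: q_def[abs_def])
  then have ev1: "eventually (\<lambda>k. dist (q k) x0 < r) sequentially"
    using p by (rule order_tendstoD[OF tendsto_dist[OF _ tendsto_const]])
  have "(\<lambda>k. t k * norm (e k)) \<longlonglongrightarrow> 0 * norm (0::'b)" by (intro tendsto_intros t e0)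
  then have ev2: "eventually (\<lambda>k. t k * norm (e k) < r) sequentially"
    using g by (intro order_tendstoD) (auto simp: good_def)
  define z where "z k = (SOME z. norm z \<le> C * norm (F p + t k *\<^sub>R a k - F (q k)) \<and> F (q k + z) = F p + t k *\<^sub>R a k)" for k
  have ev3: "eventually (\<lambda>k. norm (z k) \<le> C * (t k * norm (e k)) \<and> F (q k + z k) = F p + t k *\<^sub>R a k) sequentially"
    using ev1 ev2
  proof eventually_elim
    case (elim k)
    have nm: "norm (F p + t k *\<^sub>R a k - F (q k)) = t k * norm (e k)"
      using t(1)[of k] by (simp add: e_def)
    have "\<exists>z. norm z \<le> C * norm (F p + t k *\<^sub>R a k - F (q k)) \<and> F (q k + z) = F p + t k *\<^sub>R a k"
    proof -
      have "dist (q k) x0 < r" "norm (F p + t k *\<^sub>R a k - F (q k)) < r" using elim nm by auto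
      then show ?thesis using g unfolding good_def by blast
    qed
    then have "norm (z k) \<le> C * norm (F p + t k *\<^sub>R a k - F (q k)) \<and> F (q k + z k) = F p + t k *\<^sub>R a k"
      unfolding z_def by (rule someI_ex)
    then show ?case using nm by simp
  qed
  define uu where "uu k = u + (1 / t k) *\<^sub>R z k" for k
  have "(\<lambda>k. (1 / t k) *\<^sub>R z k) \<longlonglongrightarrow> 0"
  proof (rule tendsto_0_le[where K = "max C 0"])
    show "(\<lambda>k. norm (e k)) \<longlonglongrightarrow> 0" using tendsto_norm[OF e0] by simp
    show "eventually (\<lambda>k. norm ((1 / t k) *\<^sub>R z k) \<le> norm (norm (e k)) * max C 0) sequentially"
      using ev3
    proof eventually_elim
      case (elim k)
      have tk: "t k > 0" by (rule t(1))
      have "norm ((1 / t k) *\<^sub>R z k) = norm (z k) / t k" using tk by simp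
      also have "\<dots> \<le> C * (t k * norm (e k)) / t k" using elim tk by (intro divide_right_mono) auto
      also have "\<dots> = C * norm (e k)" using tk by simp
      also have "\<dots> \<le> norm (norm (e k)) * max C 0" by (simp add: mult.commute mult_right_mono)
      finally show ?case .
    qed
  qed
  then have "uu \<longlonglongrightarrow> u + 0" unfolding uu_def by (intro tendsto_add tendsto_const)
  moreover have "eventually (\<lambda>k. F (p + t k *\<^sub>R uu k) = F p + t k *\<^sub>R a k) sequentially"
    using ev3
  proof eventually_elim
    case (elim k)
    have "p + t k *\<^sub>R uu k = q k + z k" using t(1)[of k] by (simp add: uu_def q_def scaleR_add_right)
    then show ?case using elim by simp
  qed
  ultimately show ?thesis by auto
qed

end



context core begin

lemma good_surj: "good r c C \<Longrightarrow> dist x x0 < r \<Longrightarrow> surj (blinfun_apply (F' x))"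
  by (rule surj_near[of c]) (auto simp: good_def)

lemma good_inj: "good r c C \<Longrightarrow> dist x x0 < r \<Longrightarrow>
   adjoint (blinfun_apply (F' x)) \<nu>1 = adjoint (blinfun_apply (F' x)) \<nu>2 \<Longrightarrow> \<nu>1 = \<nu>2"
  using good_surj[of r c C x] inj_adjoint_iff_surj[OF lin_bl] by (metis injD)

lemma tangent_pre:
  assumes g: "good r c C" and x: "dist x x0 < r" and Fx: "F x \<in> \<Theta>"
  shows "tangent_cone (F -` \<Theta>) x = {u. blinfun_apply (F' x) u \<in> tangent_cone \<Theta> (F x)}"
proof (intro set_eqI iffI; clarsimp)
  fix u assume "u \<in> tangent_cone (F -` \<Theta>) x"
  then obtain t uk where t: "\<And>k. t k > 0" "t \<longlonglongrightarrow> 0" and u: "uk \<longlonglongrightarrow> u"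
    and A: "\<And>k. x + t k *\<^sub>R uk k \<in> F -` \<Theta>" unfolding tangent_cone_def by blast
  define a where "a k = (1 / t k) *\<^sub>R (F (x + t k *\<^sub>R uk k) - F x)" for k
  have "a \<longlonglongrightarrow> blinfun_apply (F' x) u" unfolding a_def[abs_def] by (rule diff_quot_seq[OF der t u])
  moreover have "F x + t k *\<^sub>R a k \<in> \<Theta>" for k using A[of k] t(1)[of k] by (simp add: a_def)
  ultimately show "blinfun_apply (F' x) u \<in> tangent_cone \<Theta> (F x)"
    unfolding tangent_cone_def using t by blast
next
  fix u assume "blinfun_apply (F' x) u \<in> tangent_cone \<Theta> (F x)"
  then obtain t a where t: "\<And>k. t k > 0" "t \<longlonglongrightarrow> 0" and a: "a \<longlonglongrightarrow> blinfun_apply (F' x) u"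
    and A: "\<And>k. F x + t k *\<^sub>R a k \<in> \<Theta>" unfolding tangent_cone_def by blast
  obtain uu where uu: "uu \<longlonglongrightarrow> u" and ev: "eventually (\<lambda>k. F (x + t k *\<^sub>R uu k) = F x + t k *\<^sub>R a k) sequentially"
    using lift[OF g x t a] by blast
  have "eventually (\<lambda>k. x + t k *\<^sub>R uu k \<in> F -` \<Theta>) sequentially"
    using ev by eventually_elim (use A in simp)
  then show "u \<in> tangent_cone (F -` \<Theta>) x" by (rule tangent_cone_eventually[OF t uu])
qed

lemma rnc_pre:
  assumes g: "good r c C" and x: "dist x x0 < r"
  shows "regular_normal_cone (F -` \<Theta>) x = adjoint (blinfun_apply (F' x)) ` regular_normal_cone \<Theta> (F x)"
proof (cases "F x \<in> \<Theta>")
  case True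
  have "polar_cone {u. blinfun_apply (F' x) u \<in> tangent_cone \<Theta> (F x)}
      = adjoint (blinfun_apply (F' x)) ` polar_cone (tangent_cone \<Theta> (F x))"
    by (rule polar_preimage[OF lin_bl good_surj[OF g x] zero_in_tangent_cone[OF True]])
  then show ?thesis using True tangent_pre[OF g x True] by (simp add: regular_normal_cone_def)
next
  case False then show ?thesis by (simp add: regular_normal_cone_def)
qed

lemma gph_pre:
  assumes g: "good r c C" and x: "dist x x0 < r"
  shows "(x, v) \<in> gph (regular_normal_cone (F -` \<Theta>)) \<longleftrightarrow>
     (\<exists>\<nu>. \<nu> \<in> regular_normal_cone \<Theta> (F x) \<and> v = adjoint (blinfun_apply (F' x)) \<nu>)"
  using rnc_pre[OF g x] by (auto simp: gph_def)

end



lemma pair_step: "(a, b) + t *\<^sub>R w = (a + t *\<^sub>R fst w, b + t *\<^sub>R snd w)"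
  by (simp add: prod_eq_iff)

lemma lin_tendsto:
  fixes f :: "'a::euclidean_space \<Rightarrow> 'b::real_normed_vector"
  shows "linear f \<Longrightarrow> X \<longlonglongrightarrow> l \<Longrightarrow> (\<lambda>k. f (X k)) \<longlonglongrightarrow> f l"
proof -
  assume "linear f" "X \<longlonglongrightarrow> l"
  then have "bounded_linear f" by (simp add: linear_conv_bounded_linear)
  then show ?thesis using \<open>X \<longlonglongrightarrow> l\<close> by (rule bounded_linear.tendsto)
qed

context core begin

lemma graph_tangent_sub:
  assumes g: "good r c C" and nu0: "\<nu>0 \<in> regular_normal_cone \<Theta> (F x0)"
    and Hd: "((\<lambda>x. adjoint (blinfun_apply (F' x)) \<nu>0) has_derivative H) (at x0)"
    and w: "w \<in> tangent_cone (gph (regular_normal_cone (F -` \<Theta>))) (x0, adjoint (blinfun_apply (F' x0)) \<nu>0)"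
  shows "\<exists>\<eta>. (blinfun_apply (F' x0) (fst w), \<eta>) \<in> tangent_cone (gph (regular_normal_cone \<Theta>)) (F x0, \<nu>0)
            \<and> snd w = H (fst w) + adjoint (blinfun_apply (F' x0)) \<eta>"
proof -
  define Ad where "Ad x = adjoint (blinfun_apply (F' x))" for x
  define G where "G x = Ad x \<nu>0" for x
  have linAd: "linear (Ad x)" for x unfolding Ad_def by (rule adjoint_linear[OF lin_bl])
  obtain t ww where t: "\<And>k. t k > 0" "t \<longlonglongrightarrow> 0" and ww: "ww \<longlonglongrightarrow> w"
    and A: "\<And>k. (x0, G x0) + t k *\<^sub>R ww k \<in> gph (regular_normal_cone (F -` \<Theta>))"
    using w unfolding tangent_cone_def G_def Ad_def by blast
  define u where "u k = fst (ww k)" for k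
  define v where "v k = snd (ww k)" for k
  have u: "u \<longlonglongrightarrow> fst w" unfolding u_def[abs_def] by (rule tendsto_fst[OF ww])
  have v: "v \<longlonglongrightarrow> snd w" unfolding v_def[abs_def] by (rule tendsto_snd[OF ww])
  define xk where "xk k = x0 + t k *\<^sub>R u k" for k
  have "xk \<longlonglongrightarrow> x0 + 0 *\<^sub>R fst w" unfolding xk_def[abs_def] by (intro tendsto_intros t u)
  then have xk: "xk \<longlonglongrightarrow> x0" by simp
  have evx: "eventually (\<lambda>k. dist (xk k) x0 < r) sequentially"
    using g by (intro order_tendstoD[OF tendsto_dist[OF xk tendsto_const]]) (auto simp: good_def)
  have A': "(xk k, G x0 + t k *\<^sub>R v k) \<in> gph (regular_normal_cone (F -` \<Theta>))" for k
    using A[of k] by (simp add: pair_step xk_def u_def v_def)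
  define \<nu>k where "\<nu>k k = (SOME \<nu>. \<nu> \<in> regular_normal_cone \<Theta> (F (xk k)) \<and> G x0 + t k *\<^sub>R v k = Ad (xk k) \<nu>)" for k
  have ev\<nu>: "eventually (\<lambda>k. \<nu>k k \<in> regular_normal_cone \<Theta> (F (xk k)) \<and> G x0 + t k *\<^sub>R v k = Ad (xk k) (\<nu>k k)) sequentially"
    using evx
  proof eventually_elim
    case (elim k)
    have "\<exists>\<nu>. \<nu> \<in> regular_normal_cone \<Theta> (F (xk k)) \<and> G x0 + t k *\<^sub>R v k = Ad (xk k) \<nu>"
      using gph_pre[OF g elim] A'[of k] unfolding Ad_def by blast
    then show ?case unfolding \<nu>k_def by (rule someI_ex)
  qed
  define a where "a k = (1 / t k) *\<^sub>R (F (x0 + t k *\<^sub>R u k) - F x0)" for k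
  have a: "a \<longlonglongrightarrow> blinfun_apply (F' x0) (fst w)" unfolding a_def[abs_def] by (rule diff_quot_seq[OF der t u])
  define \<eta>k where "\<eta>k k = (1 / t k) *\<^sub>R (\<nu>k k - \<nu>0)" for k
  define q where "q k = (1 / t k) *\<^sub>R (G (x0 + t k *\<^sub>R u k) - G x0)" for k
  have q: "q \<longlonglongrightarrow> H (fst w)" unfolding q_def[abs_def] G_def Ad_def by (rule diff_quot_seq[OF Hd t u])
  have ev_eq: "eventually (\<lambda>k. Ad (xk k) (\<eta>k k) = v k - q k) sequentially"
    using ev\<nu>
  proof eventually_elim
    case (elim k)
    have tk: "t k > 0" by (rule t(1))
    have "Ad (xk k) (\<eta>k k) = (1 / t k) *\<^sub>R (Ad (xk k) (\<nu>k k) - Ad (xk k) \<nu>0)"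
      unfolding \<eta>k_def using linAd[of "xk k"] by (simp add: linear_scale linear_diff)
    also have "\<dots> = (1 / t k) *\<^sub>R (G x0 + t k *\<^sub>R v k - G (xk k))" using elim by (simp add: G_def)
    also have "\<dots> = v k - q k" using tk by (simp add: q_def xk_def algebra_simps)
    finally show ?case .
  qed
  have vq: "(\<lambda>k. v k - q k) \<longlonglongrightarrow> snd w - H (fst w)" by (intro tendsto_diff v q)
  have lim1: "(\<lambda>k. Ad (xk k) (\<eta>k k)) \<longlonglongrightarrow> snd w - H (fst w)"
    using tendsto_cong[OF ev_eq] vq by simp
  obtain M where M: "\<And>k. norm (Ad (xk k) (\<eta>k k)) \<le> M"
    using convergent_imp_bounded[OF lim1] unfolding bounded_iff by auto
  have evb: "eventually (\<lambda>k. norm (\<eta>k k) \<le> c * M) sequentially"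
    using evx
  proof eventually_elim
    case (elim k)
    have "norm (\<eta>k k) \<le> c * norm (Ad (xk k) (\<eta>k k))" using g elim unfolding good_def Ad_def by blast
    also have "\<dots> \<le> c * M" using M[of k] g by (intro mult_left_mono) (auto simp: good_def)
    finally show ?case .
  qed
  have F'k: "(\<lambda>k. F' (xk k)) \<longlonglongrightarrow> F' x0" by (rule isCont_tendsto_compose[OF cont xk])
  have "(\<lambda>k. Ad x0 (\<eta>k k) - Ad (xk k) (\<eta>k k)) \<longlonglongrightarrow> 0"
  proof (rule tendsto_0_le[where K = "c * M"])
    show "(\<lambda>k. norm (F' x0 - F' (xk k))) \<longlonglongrightarrow> 0"
      using tendsto_norm[OF tendsto_diff[OF tendsto_const[of "F' x0"] F'k]] by simp
    show "eventually (\<lambda>k. norm (Ad x0 (\<eta>k k) - Ad (xk k) (\<eta>k k)) \<le> norm (norm (F' x0 - F' (xk k))) * (c * M)) sequentially"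
      using evb
    proof eventually_elim
      case (elim k)
      have "norm (Ad x0 (\<eta>k k) - Ad (xk k) (\<eta>k k)) = norm (adjoint (blinfun_apply (F' x0 - F' (xk k))) (\<eta>k k))"
        unfolding Ad_def by (simp add: adj_diff)
      also have "\<dots> \<le> norm (F' x0 - F' (xk k)) * norm (\<eta>k k)" by (rule adj_norm)
      also have "\<dots> \<le> norm (F' x0 - F' (xk k)) * (c * M)" using elim by (intro mult_left_mono) auto
      finally show ?case by simp
    qed
  qed
  from tendsto_add[OF lim1 this] have lim2: "(\<lambda>k. Ad x0 (\<eta>k k)) \<longlonglongrightarrow> snd w - H (fst w)" by simp
  have inj0: "inj (Ad x0)" unfolding Ad_def using surj0 by (simp add: lin_bl)
  obtain L where L: "linear L" "L \<circ> Ad x0 = id"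
    using real_vector.linear_injective_left_inverse[OF linAd inj0] by blast
  have "(\<lambda>k. L (Ad x0 (\<eta>k k))) \<longlonglongrightarrow> L (snd w - H (fst w))" by (rule lin_tendsto[OF L(1) lim2])
  moreover have "L (Ad x0 z) = z" for z using L(2) by (metis comp_apply id_apply)
  ultimately have \<eta>lim: "\<eta>k \<longlonglongrightarrow> L (snd w - H (fst w))" by simp
  define \<eta> where "\<eta> = L (snd w - H (fst w))"
  have "(\<lambda>k. Ad x0 (\<eta>k k)) \<longlonglongrightarrow> Ad x0 \<eta>" unfolding \<eta>_def by (rule lin_tendsto[OF linAd \<eta>lim])
  with lim2 have eta_eq: "Ad x0 \<eta> = snd w - H (fst w)" by (rule LIMSEQ_unique[rotated])
  have "(\<lambda>k. (a k, \<eta>k k)) \<longlonglongrightarrow> (blinfun_apply (F' x0) (fst w), \<eta>)"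
    using a \<eta>lim unfolding \<eta>_def by (rule tendsto_Pair)
  moreover have "eventually (\<lambda>k. (F x0, \<nu>0) + t k *\<^sub>R (a k, \<eta>k k) \<in> gph (regular_normal_cone \<Theta>)) sequentially"
    using ev\<nu>
  proof eventually_elim
    case (elim k)
    have tk: "t k > 0" by (rule t(1))
    have "(F x0, \<nu>0) + t k *\<^sub>R (a k, \<eta>k k) = (F (xk k), \<nu>k k)"
      using tk by (simp add: a_def \<eta>k_def xk_def)
    then show ?case using elim by (simp add: gph_def)
  qed
  ultimately have "(blinfun_apply (F' x0) (fst w), \<eta>) \<in> tangent_cone (gph (regular_normal_cone \<Theta>)) (F x0, \<nu>0)"
    by (rule tangent_cone_eventually[OF t])
  then show ?thesis using eta_eq unfolding Ad_def by (intro exI[of _ \<eta>]) auto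
qed

end



context core begin

lemma graph_tangent_sup:
  assumes g: "good r c C" and nu0: "\<nu>0 \<in> regular_normal_cone \<Theta> (F x0)"
    and Hd: "((\<lambda>x. adjoint (blinfun_apply (F' x)) \<nu>0) has_derivative H) (at x0)"
    and T: "(blinfun_apply (F' x0) u, \<eta>) \<in> tangent_cone (gph (regular_normal_cone \<Theta>)) (F x0, \<nu>0)"
  shows "(u, H u + adjoint (blinfun_apply (F' x0)) \<eta>) \<in> tangent_cone (gph (regular_normal_cone (F -` \<Theta>))) (x0, adjoint (blinfun_apply (F' x0)) \<nu>0)"
proof -
  define Ad where "Ad x = adjoint (blinfun_apply (F' x))" for x
  define G where "G x = Ad x \<nu>0" for x
  have linAd: "linear (Ad x)" for x unfolding Ad_def by (rule adjoint_linear[OF lin_bl])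
  obtain t ab where t: "\<And>k. t k > 0" "t \<longlonglongrightarrow> 0" and ab: "ab \<longlonglongrightarrow> (blinfun_apply (F' x0) u, \<eta>)"
    and A: "\<And>k. (F x0, \<nu>0) + t k *\<^sub>R ab k \<in> gph (regular_normal_cone \<Theta>)"
    using T unfolding tangent_cone_def by blast
  define a where "a k = fst (ab k)" for k
  define b where "b k = snd (ab k)" for k
  have a: "a \<longlonglongrightarrow> blinfun_apply (F' x0) u" unfolding a_def[abs_def] using tendsto_fst[OF ab] by simp
  have b: "b \<longlonglongrightarrow> \<eta>" unfolding b_def[abs_def] using tendsto_snd[OF ab] by simp
  have r: "dist x0 x0 < r" using g by (simp add: good_def)
  obtain uu where uu: "uu \<longlonglongrightarrow> u" and evF: "eventually (\<lambda>k. F (x0 + t k *\<^sub>R uu k) = F x0 + t k *\<^sub>R a k) sequentially"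
    using lift[OF g r t a] by blast
  define xk where "xk k = x0 + t k *\<^sub>R uu k" for k
  have "xk \<longlonglongrightarrow> x0 + 0 *\<^sub>R u" unfolding xk_def[abs_def] by (intro tendsto_intros t uu)
  then have xk: "xk \<longlonglongrightarrow> x0" by simp
  have evx: "eventually (\<lambda>k. dist (xk k) x0 < r) sequentially"
    using g by (intro order_tendstoD[OF tendsto_dist[OF xk tendsto_const]]) (auto simp: good_def)
  define v where "v k = (1 / t k) *\<^sub>R (G (x0 + t k *\<^sub>R uu k) - G x0) + Ad (xk k) (b k)" for k
  have F'k: "(\<lambda>k. F' (xk k)) \<longlonglongrightarrow> F' x0" by (rule isCont_tendsto_compose[OF cont xk])
  have "(\<lambda>k. (1 / t k) *\<^sub>R (G (x0 + t k *\<^sub>R uu k) - G x0)) \<longlonglongrightarrow> H u"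
    unfolding G_def Ad_def by (rule diff_quot_seq[OF Hd t uu])
  moreover have "(\<lambda>k. Ad (xk k) (b k)) \<longlonglongrightarrow> Ad x0 \<eta>" unfolding Ad_def by (rule adj_tendsto[OF F'k b])
  ultimately have v: "v \<longlonglongrightarrow> H u + Ad x0 \<eta>" unfolding v_def[abs_def] by (rule tendsto_add)
  have "(\<lambda>k. (uu k, v k)) \<longlonglongrightarrow> (u, H u + Ad x0 \<eta>)" by (rule tendsto_Pair[OF uu v])
  moreover have "eventually (\<lambda>k. (x0, G x0) + t k *\<^sub>R (uu k, v k) \<in> gph (regular_normal_cone (F -` \<Theta>))) sequentially"
    using evx evF
  proof eventually_elim
    case (elim k)
    have tk: "t k > 0" by (rule t(1))
    have mem: "\<nu>0 + t k *\<^sub>R b k \<in> regular_normal_cone \<Theta> (F (xk k))"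
      using A[of k] elim(2) by (simp add: pair_step gph_def a_def b_def xk_def)
    have "G x0 + t k *\<^sub>R v k = G (xk k) + t k *\<^sub>R Ad (xk k) (b k)"
      using tk by (simp add: v_def xk_def algebra_simps)
    also have "\<dots> = Ad (xk k) (\<nu>0 + t k *\<^sub>R b k)"
      using linAd[of "xk k"] by (simp add: G_def linear_add linear_scale)
    finally have "(x0, G x0) + t k *\<^sub>R (uu k, v k) = (xk k, Ad (xk k) (\<nu>0 + t k *\<^sub>R b k))"
      by (simp add: xk_def)
    then show ?case using gph_pre[OF g elim(1)] mem unfolding Ad_def by auto
  qed
  ultimately have "(u, H u + Ad x0 \<eta>) \<in> tangent_cone (gph (regular_normal_cone (F -` \<Theta>))) (x0, G x0)"
    by (rule tangent_cone_eventually[OF t])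
  then show ?thesis unfolding G_def Ad_def .
qed

lemma graph_tangent:
  assumes g: "good r c C" and nu0: "\<nu>0 \<in> regular_normal_cone \<Theta> (F x0)"
    and Hd: "((\<lambda>x. adjoint (blinfun_apply (F' x)) \<nu>0) has_derivative H) (at x0)"
  shows "tangent_cone (gph (regular_normal_cone (F -` \<Theta>))) (x0, adjoint (blinfun_apply (F' x0)) \<nu>0)
     = {(u, H u + adjoint (blinfun_apply (F' x0)) \<eta>) | u \<eta>.
          (blinfun_apply (F' x0) u, \<eta>) \<in> tangent_cone (gph (regular_normal_cone \<Theta>)) (F x0, \<nu>0)}"
proof (intro set_eqI iffI)
  fix w assume "w \<in> tangent_cone (gph (regular_normal_cone (F -` \<Theta>))) (x0, adjoint (blinfun_apply (F' x0)) \<nu>0)"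
  from graph_tangent_sub[OF g nu0 Hd this] obtain \<eta> where
    "(blinfun_apply (F' x0) (fst w), \<eta>) \<in> tangent_cone (gph (regular_normal_cone \<Theta>)) (F x0, \<nu>0)"
    "snd w = H (fst w) + adjoint (blinfun_apply (F' x0)) \<eta>" by blast
  then show "w \<in> {(u, H u + adjoint (blinfun_apply (F' x0)) \<eta>) | u \<eta>.
          (blinfun_apply (F' x0) u, \<eta>) \<in> tangent_cone (gph (regular_normal_cone \<Theta>)) (F x0, \<nu>0)}"
    by (intro CollectI exI[of _ "fst w"] exI[of _ \<eta>]) (simp add: prod_eq_iff)
qed (use graph_tangent_sup[OF g nu0 Hd] in blast)

end



lemma adjoint_comp:
  fixes A :: "'a::euclidean_space \<Rightarrow> 'b::euclidean_space" and B :: "'b \<Rightarrow> 'c::euclidean_space"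
  assumes "linear A" "linear B"
  shows "adjoint (B \<circ> A) y = adjoint A (adjoint B y)"
proof -
  have "adjoint (B \<circ> A) = (\<lambda>y. adjoint A (adjoint B y))"
    by (rule adjoint_unique) (simp add: adjoint_clauses[OF assms(1)] adjoint_clauses[OF assms(2)])
  then show ?thesis by simp
qed

lemma grp_aux: "a = X - Y \<Longrightarrow> b = X - (c + Y) \<Longrightarrow> b = -c + (a::'a::ab_group_add)"
  by (simp add: algebra_simps) (metis add_left_cancel)

lemma polar_algebra:
  fixes A :: "'n::euclidean_space \<Rightarrow> 's::euclidean_space" and B :: "'s \<Rightarrow> 'd::euclidean_space"
    and Hg :: "'n \<Rightarrow> 'n" and Hh :: "'s \<Rightarrow> 's" and TT :: "('d \<times> 'd) set"
  assumes lA: "linear A" and lB: "linear B" and sM: "surj (B \<circ> A)"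
    and lHg: "linear Hg" and lHh: "linear Hh"
    and sHg: "\<And>u w. Hg u \<bullet> w = u \<bullet> Hg w" and sHh: "\<And>u w. Hh u \<bullet> w = u \<bullet> Hh w"
    and T0: "(0, 0) \<in> TT"
  shows "polar_cone {(u, Hg u + adjoint A (Hh (A u)) + adjoint A (adjoint B \<eta>)) | u \<eta>. (B (A u), \<eta>) \<in> TT}
    = {(ws, w). \<exists>vs. (vs, A w) \<in> polar_cone {(z, Hh z + adjoint B \<eta>) | z \<eta>. (B z, \<eta>) \<in> TT}
                    \<and> ws = - Hg w + adjoint A vs}" (is "polar_cone ?TG = ?R")
proof (intro set_eqI iffI)
  note cA = adjoint_clauses[OF lA] and cB = adjoint_clauses[OF lB]
  have lM: "linear (B \<circ> A)" using lA lB by (simp add: linear_compose)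
  {
    fix ws w assume P: "(ws, w) \<in> polar_cone ?TG"
    have P': "ws \<bullet> u + w \<bullet> (Hg u + adjoint A (Hh (A u)) + adjoint A (adjoint B \<eta>)) \<le> 0"
      if "(B (A u), \<eta>) \<in> TT" for u \<eta>
      using P that unfolding polar_cone_def by (auto simp: inner_Pair)
    define p where "p = ws + Hg w + adjoint A (Hh (A w))"
    have key: "ws \<bullet> u + w \<bullet> (Hg u + adjoint A (Hh (A u)) + adjoint A (adjoint B \<eta>))
        = p \<bullet> u + B (A w) \<bullet> \<eta>" for u \<eta>
    proof -
      have "w \<bullet> Hg u = Hg w \<bullet> u" by (simp add: sHg)
      moreover have "w \<bullet> adjoint A (Hh (A u)) = adjoint A (Hh (A w)) \<bullet> u"
        by (simp add: cA sHh)
      moreover have "w \<bullet> adjoint A (adjoint B \<eta>) = B (A w) \<bullet> \<eta>" by (simp add: cA cB)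
      ultimately show ?thesis by (simp add: p_def inner_add_left inner_add_right)
    qed
    have pk: "p \<bullet> k = 0" if "(B \<circ> A) k = 0" for k
    proof -
      have 1: "(B (A k), 0) \<in> TT" "(B (A (-k)), 0) \<in> TT"
        using that T0 linear_neg[OF lM, of k] by auto
      have "p \<bullet> k \<le> 0" using P'[OF 1(1)] key[of k 0] by simp
      moreover have "p \<bullet> (-k) \<le> 0" using P'[OF 1(2)] key[of "-k" 0] by simp
      ultimately show ?thesis by simp
    qed
    then have "p \<in> ((B \<circ> A) -` {0})\<^sup>\<bottom>"
      by (auto simp: orthogonal_comp_def orthogonal_def inner_commute)
    also have "(B \<circ> A) -` {0} = (range (adjoint (B \<circ> A)))\<^sup>\<bottom>" by (rule ker_orthogonal_comp_adjoint[OF lM])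
    also have "(range (adjoint (B \<circ> A)))\<^sup>\<bottom>\<^sup>\<bottom> = range (adjoint (B \<circ> A))"
      by (intro orthogonal_comp_self linear_subspace_image adjoint_linear lM subspace_UNIV)
    finally obtain \<xi> where \<xi>: "p = adjoint A (adjoint B \<xi>)" using adjoint_comp[OF lA lB] by auto
    define vs where "vs = - Hh (A w) + adjoint B \<xi>"
    have "adjoint A vs = adjoint A (adjoint B \<xi>) - adjoint A (Hh (A w))"
      by (simp add: vs_def linear_diff[OF adjoint_linear[OF lA]])
    moreover have "ws = adjoint A (adjoint B \<xi>) - (Hg w + adjoint A (Hh (A w)))"
      using \<xi> unfolding p_def eq_diff_eq by (simp add: add.assoc)
    ultimately have ws: "ws = - Hg w + adjoint A vs" by (rule grp_aux)
    have "(vs, A w) \<in> polar_cone {(z, Hh z + adjoint B \<eta>) | z \<eta>. (B z, \<eta>) \<in> TT}"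
      unfolding polar_cone_def
    proof (intro CollectI ballI)
      fix zz assume "zz \<in> {(z, Hh z + adjoint B \<eta>) | z \<eta>. (B z, \<eta>) \<in> TT}"
      then obtain z \<eta> where zz: "zz = (z, Hh z + adjoint B \<eta>)" and T: "(B z, \<eta>) \<in> TT" by blast
      obtain u where u: "B z = (B \<circ> A) u" using sM by (metis surjD)
      have T': "(B (A u), \<eta>) \<in> TT" using T u by simp
      have "(vs, A w) \<bullet> zz = \<xi> \<bullet> B z + B (A w) \<bullet> \<eta>"
        by (simp add: zz inner_Pair vs_def inner_add_left inner_add_right inner_diff_left cB sHh)
      also have "\<dots> = p \<bullet> u + B (A w) \<bullet> \<eta>" using u \<xi> by (simp add: cA cB)
      also have "\<dots> \<le> 0" using P'[OF T'] key[of u \<eta>] by simp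
      finally show "(vs, A w) \<bullet> zz \<le> 0" .
    qed
    then have "(ws, w) \<in> ?R" using ws by blast
  }
  then show "x \<in> polar_cone ?TG \<Longrightarrow> x \<in> ?R" for x by (cases x) auto
next
  note cA = adjoint_clauses[OF lA] and cB = adjoint_clauses[OF lB]
  fix x assume "x \<in> ?R"
  then obtain ws w vs where x: "x = (ws, w)" and P: "(vs, A w) \<in> polar_cone {(z, Hh z + adjoint B \<eta>) | z \<eta>. (B z, \<eta>) \<in> TT}"
    and ws: "ws = - Hg w + adjoint A vs" by blast
  show "x \<in> polar_cone ?TG" unfolding polar_cone_def
  proof (intro CollectI ballI)
    fix zz assume "zz \<in> ?TG"
    then obtain u \<eta> where zz: "zz = (u, Hg u + adjoint A (Hh (A u)) + adjoint A (adjoint B \<eta>))"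
      and T: "(B (A u), \<eta>) \<in> TT" by blast
    have "(A u, Hh (A u) + adjoint B \<eta>) \<in> {(z, Hh z + adjoint B \<eta>) | z \<eta>. (B z, \<eta>) \<in> TT}" using T by blast
    then have le: "(vs, A w) \<bullet> (A u, Hh (A u) + adjoint B \<eta>) \<le> 0" using P unfolding polar_cone_def by blast
    have "x \<bullet> zz = (vs, A w) \<bullet> (A u, Hh (A u) + adjoint B \<eta>)"
      by (simp add: x zz ws inner_Pair inner_add_left inner_add_right inner_diff_left cA cB sHg)
    then show "x \<bullet> zz \<le> 0" using le by simp
  qed
qed




lemma line_deriv:
  fixes \<Phi> :: "'a::real_normed_vector \<Rightarrow> 'b::real_normed_vector"
  assumes der: "\<And>y. (\<Phi> has_derivative D y) (at y)" and l: "bounded_linear ll"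
  shows "((\<lambda>s. ll (\<Phi> (a + s *\<^sub>R u))) has_real_derivative ll (D (a + s *\<^sub>R u) u)) (at s)"
proof -
  have 1: "((\<lambda>s. a + s *\<^sub>R u) has_derivative (\<lambda>h. h *\<^sub>R u)) (at s)"
    by (auto intro!: derivative_eq_intros)
  have 2: "((\<lambda>s. \<Phi> (a + s *\<^sub>R u)) has_derivative (\<lambda>h. D (a + s *\<^sub>R u) (h *\<^sub>R u))) (at s)"
    using has_derivative_compose[OF 1 der] by (simp add: o_def)
  have 3: "((\<lambda>s. ll (\<Phi> (a + s *\<^sub>R u))) has_derivative (\<lambda>h. ll (D (a + s *\<^sub>R u) (h *\<^sub>R u)))) (at s)"
    by (rule bounded_linear.has_derivative[OF l 2])
  have bD: "bounded_linear (D (a + s *\<^sub>R u))" using der by (rule has_derivative_bounded_linear)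
  have "(\<lambda>h. ll (D (a + s *\<^sub>R u) (h *\<^sub>R u))) = (*) (ll (D (a + s *\<^sub>R u) u))"
    by (rule ext) (simp add: linear_scale[OF bounded_linear.linear[OF bD]] linear_scale[OF bounded_linear.linear[OF l]])
  with 3 show ?thesis by (simp add: has_field_derivative_def)
qed

lemma abs_aux: "\<bar>q - a\<bar> \<le> \<bar>a - b\<bar> / 4 \<Longrightarrow> \<bar>q - b\<bar> \<le> \<bar>a - b\<bar> / 4 \<Longrightarrow> 0 < \<bar>a - b\<bar> \<Longrightarrow> False"
  for q a b :: real
  by (simp add: abs_if split: if_splits)

lemma C2_sym:
  fixes f :: "'a::euclidean_space \<Rightarrow> 'b::euclidean_space"
  assumes C2: "C2_with f f' f''"
  shows "blinfun_apply (blinfun_apply (f'' x) u) v = blinfun_apply (blinfun_apply (f'' x) v) u"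
proof -
  have d1: "\<And>y. (f has_derivative blinfun_apply (f' y)) (at y)"
    and d2: "\<And>y. (f' has_derivative blinfun_apply (f'' y)) (at y)"
    and c2: "isCont f'' x"
    using C2 unfolding C2_with_def by (auto simp: continuous_on_eq_continuous_at)
  define Q where "Q e u v t = (e \<bullet> f (x + t *\<^sub>R u + t *\<^sub>R v) - e \<bullet> f (x + t *\<^sub>R u) - e \<bullet> f (x + t *\<^sub>R v) + e \<bullet> f x) / t^2"
    for e u v and t :: real
  have Qsym: "Q e u v t = Q e v u t" for e u v t by (simp add: Q_def add_ac)
  have key: "\<exists>\<delta>>0. \<forall>t. 0 < t \<and> t < \<delta> \<longrightarrow> \<bar>Q e u v t - e \<bullet> blinfun_apply (blinfun_apply (f'' x) v) u\<bar> \<le> \<epsilon>"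
    if \<epsilon>: "\<epsilon> > 0" for e u v \<epsilon>
  proof -
    define K where "K = norm e * norm v * norm u + 1"
    have K: "K > 0" by (simp add: K_def add_nonneg_pos)
    obtain d where d: "d > 0" "\<And>p. dist p x < d \<Longrightarrow> dist (f'' p) (f'' x) < \<epsilon> / K"
      using c2 \<epsilon> K unfolding continuous_at_eps_delta by (meson divide_pos_pos)
    define \<delta> where "\<delta> = d / (norm u + norm v + 1)"
    have nuv: "norm u + norm v + 1 > 0" by (simp add: add_nonneg_pos)
    have \<delta>: "\<delta> > 0" using d nuv by (simp add: \<delta>_def)
    have "\<bar>Q e u v t - e \<bullet> blinfun_apply (blinfun_apply (f'' x) v) u\<bar> \<le> \<epsilon>" if t: "0 < t" "t < \<delta>" for t
    proof -
      define \<phi> where "\<phi> s = e \<bullet> f ((x + t *\<^sub>R v) + s *\<^sub>R u) - e \<bullet> f (x + s *\<^sub>R u)" for s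
      define \<phi>' where "\<phi>' s = e \<bullet> blinfun_apply (f' ((x + t *\<^sub>R v) + s *\<^sub>R u)) u - e \<bullet> blinfun_apply (f' (x + s *\<^sub>R u)) u" for s
      have "(\<phi> has_real_derivative \<phi>' s) (at s)" for s
        unfolding \<phi>_def[abs_def] \<phi>'_def
        by (intro DERIV_diff line_deriv[OF d1] bounded_linear_inner_right)
      then obtain \<xi> where \<xi>: "0 < \<xi>" "\<xi> < t" "\<phi> t - \<phi> 0 = (t - 0) * \<phi>' \<xi>"
        using MVT2[OF t(1), of \<phi> \<phi>'] by blast
      define \<psi> where "\<psi> r = e \<bullet> blinfun_apply (f' ((x + \<xi> *\<^sub>R u) + r *\<^sub>R v)) u" for r
      define \<psi>' where "\<psi>' r = e \<bullet> blinfun_apply (blinfun_apply (f'' ((x + \<xi> *\<^sub>R u) + r *\<^sub>R v)) v) u" for r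
      have bl: "bounded_linear (\<lambda>M. e \<bullet> blinfun_apply M u)"
        by (intro bounded_linear_compose[OF bounded_linear_inner_right] blinfun.bounded_linear_left)
      have "(\<psi> has_real_derivative \<psi>' r) (at r)" for r
        unfolding \<psi>_def[abs_def] \<psi>'_def by (rule line_deriv[OF d2 bl])
      then obtain \<rho> where \<rho>: "0 < \<rho>" "\<rho> < t" "\<psi> t - \<psi> 0 = (t - 0) * \<psi>' \<rho>"
        using MVT2[OF t(1), of \<psi> \<psi>'] by blast
      have "\<phi>' \<xi> = \<psi> t - \<psi> 0" by (simp add: \<phi>'_def \<psi>_def add_ac)
      moreover have "\<phi> t - \<phi> 0 = t^2 * Q e u v t" using t(1) by (simp add: \<phi>_def Q_def add_ac)
      ultimately have "t^2 * Q e u v t = t^2 * \<psi>' \<rho>" using \<xi>(3) \<rho>(3) by (simp add: power2_eq_square) (metis mult.commute)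
      then have Qeq: "Q e u v t = \<psi>' \<rho>" using t(1) by simp
      define p where "p = (x + \<xi> *\<^sub>R u) + \<rho> *\<^sub>R v"
      have "dist p x \<le> \<xi> * norm u + \<rho> * norm v"
        using \<xi> \<rho> by (simp add: p_def dist_norm) (metis norm_triangle_ineq norm_scaleR abs_of_pos)
      also have "\<dots> \<le> t * norm u + t * norm v" using \<xi> \<rho> by (intro add_mono mult_right_mono) auto
      also have "\<dots> < \<delta> * (norm u + norm v + 1)" using t nuv
        by (simp add: distrib_left) (smt (verit) mult_strict_right_mono norm_ge_zero mult_right_mono)
      also have "\<dots> = d" using nuv by (simp add: \<delta>_def)
      finally have pd: "dist p x < d" .
      have "\<bar>Q e u v t - e \<bullet> blinfun_apply (blinfun_apply (f'' x) v) u\<bar>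
          = \<bar>e \<bullet> blinfun_apply (blinfun_apply (f'' p - f'' x) v) u\<bar>"
        by (simp add: Qeq \<psi>'_def p_def blinfun.diff_left inner_diff_right)
      also have "\<dots> \<le> norm e * norm (blinfun_apply (blinfun_apply (f'' p - f'' x) v) u)"
        by (rule Cauchy_Schwarz_ineq2)
      also have "\<dots> \<le> norm e * (norm (f'' p - f'' x) * norm v * norm u)"
        by (intro mult_left_mono order_trans[OF norm_blinfun] mult_right_mono norm_blinfun) auto
      also have "\<dots> \<le> norm e * ((\<epsilon> / K) * norm v * norm u)"
        using d(2)[OF pd] by (intro mult_left_mono mult_right_mono) (auto simp: dist_norm)
      also have "\<dots> = (\<epsilon> / K) * (norm e * norm v * norm u)" by simp
      also have "\<dots> \<le> (\<epsilon> / K) * K" using \<epsilon> K by (intro mult_left_mono) (auto simp: K_def)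
      also have "\<dots> = \<epsilon>" using K by simp
      finally show ?thesis .
    qed
    then show ?thesis using \<delta> by blast
  qed
  have eq: "e \<bullet> blinfun_apply (blinfun_apply (f'' x) v) u = e \<bullet> blinfun_apply (blinfun_apply (f'' x) u) v" for e
  proof (rule ccontr)
    define a where "a = e \<bullet> blinfun_apply (blinfun_apply (f'' x) v) u"
    define b where "b = e \<bullet> blinfun_apply (blinfun_apply (f'' x) u) v"
    assume "e \<bullet> blinfun_apply (blinfun_apply (f'' x) v) u \<noteq> e \<bullet> blinfun_apply (blinfun_apply (f'' x) u) v"
    then have ab: "\<bar>a - b\<bar> > 0" by (simp add: a_def b_def)
    obtain \<delta>1 where \<delta>1: "\<delta>1 > 0" "\<And>t. 0 < t \<and> t < \<delta>1 \<Longrightarrow> \<bar>Q e u v t - a\<bar> \<le> \<bar>a - b\<bar> / 4"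
      using key[of "\<bar>a - b\<bar> / 4" e u v] ab unfolding a_def by auto
    obtain \<delta>2 where \<delta>2: "\<delta>2 > 0" "\<And>t. 0 < t \<and> t < \<delta>2 \<Longrightarrow> \<bar>Q e v u t - b\<bar> \<le> \<bar>a - b\<bar> / 4"
      using key[of "\<bar>a - b\<bar> / 4" e v u] ab unfolding b_def by auto
    define t where "t = min \<delta>1 \<delta>2 / 2"
    have t: "0 < t" "t < \<delta>1" "t < \<delta>2" using \<delta>1 \<delta>2 by (auto simp: t_def)
    have "\<bar>Q e u v t - a\<bar> \<le> \<bar>a - b\<bar> / 4" "\<bar>Q e u v t - b\<bar> \<le> \<bar>a - b\<bar> / 4"
      using \<delta>1(2)[of t] \<delta>2(2)[of t] t Qsym[of e u v t] by auto
    then show False using ab by (rule abs_aux)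
  qed
  show ?thesis
    by (rule euclidean_eqI) (use eq in \<open>simp add: inner_commute\<close>)
qed




lemma hess_sum: "hess_mult lam B w = (\<Sum>i\<in>Basis. (blinfun_apply (blinfun_apply B w) i \<bullet> lam) *\<^sub>R i)"
  unfolding hess_mult_def by (rule adjoint_sum[OF lin_bl])

lemma hess_linear: "linear (hess_mult lam B)"
  by (rule linearI) (simp_all add: hess_sum blinfun.add_right blinfun.scaleR_right plus_blinfun.rep_eq scaleR_blinfun.rep_eq inner_add_left
      scaleR_add_left sum.distrib scaleR_sum_right)

lemma hess_sym:
  assumes "C2_with f f' f''"
  shows "hess_mult lam (f'' x) u \<bullet> w = u \<bullet> hess_mult lam (f'' x) w"
proof -
  have "hess_mult lam (f'' x) u \<bullet> w = lam \<bullet> blinfun_apply (blinfun_apply (f'' x) u) w"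
    unfolding hess_mult_def by (simp add: adjoint_clauses(2)[OF lin_bl])
  also have "\<dots> = lam \<bullet> blinfun_apply (blinfun_apply (f'' x) w) u" using C2_sym[OF assms] by metis
  also have "\<dots> = u \<bullet> hess_mult lam (f'' x) w"
    unfolding hess_mult_def by (simp add: adjoint_clauses(1)[OF lin_bl] inner_commute)
  finally show ?thesis .
qed

lemma adj_deriv:
  assumes d2: "(g' has_derivative blinfun_apply (g'' x)) (at x)" and dl: "(lam has_derivative L) (at x)"
  shows "((\<lambda>y. adjoint (blinfun_apply (g' y)) (lam y)) has_derivative
           (\<lambda>u. hess_mult (lam x) (g'' x) u + adjoint (blinfun_apply (g' x)) (L u))) (at x)"
proof -
  have di: "((\<lambda>y. blinfun_apply (g' y) i) has_derivative (\<lambda>u. blinfun_apply (blinfun_apply (g'' x) u) i)) (at x)" for i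
    by (rule bounded_linear.has_derivative[OF blinfun.bounded_linear_left d2])
  have "((\<lambda>y. \<Sum>i\<in>Basis. (blinfun_apply (g' y) i \<bullet> lam y) *\<^sub>R i) has_derivative
      (\<lambda>u. \<Sum>i\<in>Basis. (blinfun_apply (g' x) i \<bullet> L u + blinfun_apply (blinfun_apply (g'' x) u) i \<bullet> lam x) *\<^sub>R i)) (at x)"
    by (intro has_derivative_sum has_derivative_scaleR_left has_derivative_inner di dl)
  moreover have "(\<lambda>u. \<Sum>i\<in>Basis. (blinfun_apply (g' x) i \<bullet> L u + blinfun_apply (blinfun_apply (g'' x) u) i \<bullet> lam x) *\<^sub>R i)
      = (\<lambda>u. hess_mult (lam x) (g'' x) u + adjoint (blinfun_apply (g' x)) (L u))"
    by (rule ext) (simp add: hess_sum adjoint_sum[OF lin_bl] scaleR_add_left sum.distrib add.commute)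
  ultimately show ?thesis by (simp add: adjoint_sum[OF lin_bl])
qed

lemma C2_cont:
  assumes "C2_with f f' f''"
  shows "isCont f' x" "isCont f x" "\<And>x. (f has_derivative blinfun_apply (f' x)) (at x)"
    "\<And>x. (f' has_derivative blinfun_apply (f'' x)) (at x)"
  using assms unfolding C2_with_def by (auto intro: has_derivative_continuous)




theorem mainTheorem5:
  fixes g :: "'n::euclidean_space \<Rightarrow> 's::euclidean_space"
    and g' :: "'n \<Rightarrow> 'n \<Rightarrow>\<^sub>L 's" and g'' :: "'n \<Rightarrow> 'n \<Rightarrow>\<^sub>L 'n \<Rightarrow>\<^sub>L 's"
    and D :: "'s set" and xbar xstar :: 'n
    and h :: "'s \<Rightarrow> 'd::euclidean_space"
    and h' :: "'s \<Rightarrow> 's \<Rightarrow>\<^sub>L 'd" and h'' :: "'s \<Rightarrow> 's \<Rightarrow>\<^sub>L 's \<Rightarrow>\<^sub>L 'd"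
    and \<Theta> :: "'d set" and V :: "'s set"
  assumes g_C2: "C2_with g g' g''"
    and D_closed: "closed D"
    and xbar_in: "xbar \<in> g -` D"
    and A1_Theta: "closed \<Theta>"
    and A1_h: "C2_with h h' h''"
    and A1_V: "open V" "g xbar \<in> V"
    and A1_surj: "surj (blinfun_apply (h' (g xbar)))"
    and A1_D: "D \<inter> V = {z \<in> V. h z \<in> \<Theta>}"
    and A2: "\<forall>z. \<exists>u k. blinfun_apply (h' (g xbar)) k = 0 \<and> z = blinfun_apply (g' xbar) u + k"
    and xstar_in: "xstar \<in> regular_normal_cone (g -` D) xbar"
  shows "(\<exists>!lam. lam \<in> regular_normal_cone D (g xbar) \<and>
                 adjoint (blinfun_apply (g' xbar)) lam = xstar) \<and>
         (\<forall>lam. lam \<in> regular_normal_cone D (g xbar) \<and>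
                 adjoint (blinfun_apply (g' xbar)) lam = xstar \<longrightarrow>
           regular_normal_cone (gph (regular_normal_cone (g -` D))) (xbar, xstar) =
             {(wstar, w). \<exists>vstar :: 's.
                 (vstar, blinfun_apply (g' xbar) w)
                    \<in> regular_normal_cone (gph (regular_normal_cone D)) (g xbar, lam) \<and>
                 wstar = - hess_mult lam (g'' xbar) w + adjoint (blinfun_apply (g' xbar)) vstar})"
proof -
  define A where "A = blinfun_apply (g' xbar)"
  define B where "B = blinfun_apply (h' (g xbar))"
  define yb where "yb = g xbar"
  define F where "F x = h (g x)" for x
  define F' where "F' x = h' (g x) o\<^sub>L g' x" for x
  note dg = C2_cont(3)[OF g_C2] and dg2 = C2_cont(4)[OF g_C2]
  note dh = C2_cont(3)[OF A1_h] and dh2 = C2_cont(4)[OF A1_h]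
  have lA: "linear A" and lB: "linear B" unfolding A_def B_def by (rule lin_bl)+
  have derF: "(F has_derivative blinfun_apply (F' x)) (at x)" for x
  proof -
    have "((\<lambda>x. h (g x)) has_derivative (\<lambda>v. blinfun_apply (h' (g x)) (blinfun_apply (g' x) v))) (at x)"
      using has_derivative_compose[OF dg dh] by (simp add: o_def)
    moreover have "blinfun_apply (F' x) = (\<lambda>v. blinfun_apply (h' (g x)) (blinfun_apply (g' x) v))"
      by (rule ext) (simp add: F'_def)
    ultimately show ?thesis by (simp add: F_def[abs_def])
  qed
  have contF: "isCont F' xbar"
  proof -
    have c1: "isCont (\<lambda>x. h' (g x)) xbar"
      by (rule isCont_o2[OF C2_cont(2)[OF g_C2] C2_cont(1)[OF A1_h]])
    have c2: "isCont g' xbar" by (rule C2_cont(1)[OF g_C2])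
    show ?thesis unfolding F'_def isCont_def
      by (rule bounded_bilinear.tendsto[OF bounded_bilinear_blinfun_compose c1[unfolded isCont_def] c2[unfolded isCont_def]])
  qed
  have F'0: "blinfun_apply (F' xbar) = B \<circ> A" by (rule ext) (simp add: F'_def A_def B_def)
  have surjF: "surj (blinfun_apply (F' xbar))"
  proof -
    have "\<exists>u. B (A u) = d" for d
    proof -
      obtain z where z: "B z = d" using A1_surj unfolding B_def by (metis surjD)
      obtain u k where uk: "B k = 0" "z = A u + k" using A2 unfolding A_def B_def by blast
      have "B (A u) = B z" using uk linear_add[OF lB, of "A u" k] by simp
      then show ?thesis using z by blast
    qed
    then show ?thesis unfolding F'0 by (metis comp_apply surjI)
  qed
  interpret cF: core F F' xbar by unfold_locales (rule derF, rule contF, rule surjF)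
  interpret cH: core h h' yb
    by unfold_locales (rule dh, rule C2_cont(1)[OF A1_h], use A1_surj yb_def in simp)
  obtain rF cc CF where gF: "cF.good rF cc CF" using cF.good_exists by blast
  obtain rH ch CH where gH: "cH.good rH ch CH" using cH.good_exists by blast
  have rF0: "dist xbar xbar < rF" using gF by (simp add: cF.good_def)
  have rH0: "dist yb yb < rH" using gH by (simp add: cH.good_def)
  have contg: "continuous_on UNIV g"
    using dg by (auto simp: continuous_on_eq_continuous_at intro: has_derivative_continuous)
  have openU: "open (g -` V)" using open_vimage[OF A1_V(1) contg] .
  have xU: "xbar \<in> g -` V" using A1_V(2) by simp
  have locG: "(g -` D) \<inter> g -` V = (F -` \<Theta>) \<inter> g -` V" using A1_D by (auto simp: F_def)
  have locD: "D \<inter> V = (h -` \<Theta>) \<inter> V" using A1_D by auto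
  have rncG: "regular_normal_cone (g -` D) xbar = regular_normal_cone (F -` \<Theta>) xbar"
    by (rule rnc_local[OF openU xU locG])
  have rncD: "regular_normal_cone D yb = regular_normal_cone (h -` \<Theta>) yb"
    using rnc_local[OF A1_V(1) A1_V(2) locD] by (simp add: yb_def)
  have Fxb: "F xbar = h yb" by (simp add: F_def yb_def)
  have adjF: "adjoint (blinfun_apply (F' xbar)) \<nu> = adjoint A (adjoint B \<nu>)" for \<nu>
    unfolding F'0 by (rule adjoint_comp[OF lA lB])
  have NG: "regular_normal_cone (F -` \<Theta>) xbar = adjoint (blinfun_apply (F' xbar)) ` regular_normal_cone \<Theta> (h yb)"
    using cF.rnc_pre[OF gF rF0] Fxb by simp
  have ND: "regular_normal_cone (h -` \<Theta>) yb = adjoint B ` regular_normal_cone \<Theta> (h yb)"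
    using cH.rnc_pre[OF gH rH0] by (simp add: B_def yb_def)
  have lamD: "\<exists>\<nu>. \<nu> \<in> regular_normal_cone \<Theta> (h yb) \<and> lam = adjoint B \<nu> \<and> xstar = adjoint (blinfun_apply (F' xbar)) \<nu>"
    if "lam \<in> regular_normal_cone D yb" "adjoint A lam = xstar" for lam
    using that rncD ND adjF by auto
  have part1: "\<exists>!lam. lam \<in> regular_normal_cone D (g xbar) \<and> adjoint (blinfun_apply (g' xbar)) lam = xstar"
  proof -
    obtain \<nu> where \<nu>: "\<nu> \<in> regular_normal_cone \<Theta> (h yb)" "xstar = adjoint (blinfun_apply (F' xbar)) \<nu>"
      using xstar_in rncG NG by auto
    have ex: "adjoint B \<nu> \<in> regular_normal_cone D yb \<and> adjoint A (adjoint B \<nu>) = xstar"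
      using \<nu> rncD ND adjF by auto
    have un: "l1 = l2" if h1: "l1 \<in> regular_normal_cone D yb \<and> adjoint A l1 = xstar"
      and h2: "l2 \<in> regular_normal_cone D yb \<and> adjoint A l2 = xstar" for l1 l2
    proof -
      obtain \<nu>1 where 1: "l1 = adjoint B \<nu>1" "xstar = adjoint (blinfun_apply (F' xbar)) \<nu>1"
        using lamD h1 by blast
      obtain \<nu>2 where 2: "l2 = adjoint B \<nu>2" "xstar = adjoint (blinfun_apply (F' xbar)) \<nu>2"
        using lamD h2 by blast
      have "\<nu>1 = \<nu>2" using cF.good_inj[OF gF rF0] 1(2) 2(2) by metis
      then show ?thesis using 1 2 by simp
    qed
    show ?thesis unfolding A_def[symmetric] yb_def[symmetric] using ex un by blast
  qed
  have part2: "regular_normal_cone (gph (regular_normal_cone (g -` D))) (xbar, xstar) =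
             {(wstar, w). \<exists>vstar :: 's.
                 (vstar, A w) \<in> regular_normal_cone (gph (regular_normal_cone D)) (yb, lam) \<and>
                 wstar = - hess_mult lam (g'' xbar) w + adjoint A vstar}"
    if lam: "lam \<in> regular_normal_cone D yb" "adjoint A lam = xstar" for lam
  proof -
    obtain \<nu> where \<nu>: "\<nu> \<in> regular_normal_cone \<Theta> (h yb)" "lam = adjoint B \<nu>"
      "xstar = adjoint (blinfun_apply (F' xbar)) \<nu>" using lamD[OF lam] by blast
    define Hh where "Hh = hess_mult \<nu> (h'' yb)"
    define Hg where "Hg = hess_mult lam (g'' xbar)"
    have HdD0: "((\<lambda>y. adjoint (blinfun_apply (h' y)) \<nu>) has_derivative
        (\<lambda>z. hess_mult \<nu> (h'' yb) z + adjoint (blinfun_apply (h' yb)) 0)) (at yb)"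
      using adj_deriv[OF dh2 has_derivative_const[of \<nu>]] .
    have HdD: "((\<lambda>y. adjoint (blinfun_apply (h' y)) \<nu>) has_derivative Hh) (at yb)"
    proof -
      have "adjoint (blinfun_apply (h' yb)) 0 = 0" by (rule linear_0[OF adjoint_linear[OF lin_bl]])
      then show ?thesis using HdD0 by (simp add: Hh_def)
    qed
    have HdD': "((\<lambda>x. adjoint (blinfun_apply (h' (g x))) \<nu>) has_derivative (\<lambda>u. Hh (A u))) (at xbar)"
      using has_derivative_compose[OF dg HdD[unfolded yb_def]] by (simp add: o_def A_def)
    have eqfun: "(\<lambda>x. adjoint (blinfun_apply (F' x)) \<nu>) = (\<lambda>x. adjoint (blinfun_apply (g' x)) (adjoint (blinfun_apply (h' (g x))) \<nu>))"
    proof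
      fix x
      have "blinfun_apply (F' x) = blinfun_apply (h' (g x)) \<circ> blinfun_apply (g' x)" by (rule ext) (simp add: F'_def)
      then show "adjoint (blinfun_apply (F' x)) \<nu> = adjoint (blinfun_apply (g' x)) (adjoint (blinfun_apply (h' (g x))) \<nu>)"
        using adjoint_comp[OF lin_bl lin_bl] by simp
    qed
    have HdG: "((\<lambda>x. adjoint (blinfun_apply (F' x)) \<nu>) has_derivative (\<lambda>u. Hg u + adjoint A (Hh (A u)))) (at xbar)"
      unfolding eqfun using adj_deriv[where g''=g'' and x=xbar, OF dg2[of xbar] HdD'] \<nu>(2)
      by (simp add: Hg_def A_def B_def yb_def)
    have nuF: "\<nu> \<in> regular_normal_cone \<Theta> (F xbar)" using \<nu>(1) Fxb by simp
    have nuH: "\<nu> \<in> regular_normal_cone \<Theta> (h yb)" by (rule \<nu>(1))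
    define TT where "TT = tangent_cone (gph (regular_normal_cone \<Theta>)) (h yb, \<nu>)"
    have TG: "tangent_cone (gph (regular_normal_cone (F -` \<Theta>))) (xbar, xstar) =
        {(u, Hg u + adjoint A (Hh (A u)) + adjoint A (adjoint B \<eta>)) | u \<eta>. (B (A u), \<eta>) \<in> TT}"
      using cF.graph_tangent[OF gF nuF HdG] \<nu>(3) Fxb unfolding TT_def by (simp add: F'0 adjoint_comp[OF lA lB])
    have TD: "tangent_cone (gph (regular_normal_cone (h -` \<Theta>))) (yb, lam) =
        {(z, Hh z + adjoint B \<eta>) | z \<eta>. (B z, \<eta>) \<in> TT}"
      using cH.graph_tangent[OF gH nuH HdD] \<nu>(2) unfolding TT_def B_def yb_def by simp
    have inG: "(xbar, xstar) \<in> gph (regular_normal_cone (F -` \<Theta>))"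
      using xstar_in rncG by (simp add: gph_def)
    have inD: "(yb, lam) \<in> gph (regular_normal_cone (h -` \<Theta>))"
      using lam(1) rncD by (simp add: gph_def)
    have openUG: "open (g -` V \<times> (UNIV :: 'n set))" using openU by (simp add: open_Times)
    have openVD: "open (V \<times> (UNIV :: 's set))" using A1_V(1) by (simp add: open_Times)
    have L1: "regular_normal_cone (gph (regular_normal_cone (g -` D))) (xbar, xstar)
        = regular_normal_cone (gph (regular_normal_cone (F -` \<Theta>))) (xbar, xstar)"
      by (rule rnc_local[OF openUG _ gph_rnc_local[OF openU locG]]) (use xU in simp)
    have L2: "regular_normal_cone (gph (regular_normal_cone D)) (yb, lam)
        = regular_normal_cone (gph (regular_normal_cone (h -` \<Theta>))) (yb, lam)"
      by (rule rnc_local[OF openVD _ gph_rnc_local[OF A1_V(1) locD]]) (use A1_V(2) yb_def in simp)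
    have T0: "(0, 0) \<in> TT" using zero_in_tangent_cone[of "(h yb, \<nu>)" "gph (regular_normal_cone \<Theta>)"] nuH
      unfolding TT_def by (simp add: gph_def zero_prod_def)
    have sM: "surj (B \<circ> A)" using surjF F'0 by simp
    have sHg: "Hg u \<bullet> w = u \<bullet> Hg w" for u w unfolding Hg_def by (rule hess_sym[OF g_C2])
    have sHh: "Hh u \<bullet> w = u \<bullet> Hh w" for u w unfolding Hh_def by (rule hess_sym[OF A1_h])
    have PA: "polar_cone {(u, Hg u + adjoint A (Hh (A u)) + adjoint A (adjoint B \<eta>)) | u \<eta>. (B (A u), \<eta>) \<in> TT}
      = {(ws, w). \<exists>vs. (vs, A w) \<in> polar_cone {(z, Hh z + adjoint B \<eta>) | z \<eta>. (B z, \<eta>) \<in> TT}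
                      \<and> ws = - Hg w + adjoint A vs}"
      by (rule polar_algebra[OF lA lB sM _ _ sHg sHh T0]) (simp_all add: Hg_def Hh_def hess_linear)
    show ?thesis
      unfolding L1 L2 using PA inG inD TG TD by (simp add: regular_normal_cone_def Hg_def)
  qed
  show ?thesis using part1 part2 unfolding A_def yb_def by blast
qed



end
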